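(* Let $n\ge1$ and let $R=\mathbb{C}[x_{ij}: i\ne j,\ i,j\in[1,n+1]]$. Let $X$ be the $(n+1)\times(n+1)$ matrix with off-diagonal entries $x_{ij}$ and zero diagonal. Then the set of $2\times2$ minors of $X$ is a Gröbner basis of the ideal it generates with respect to the degree reverse lexicographic order induced by any total order of the variables.
   Context: Degree revlex order (for variables ordered $x_1>\dots>x_N$): $x^a>x^b$ if $\sum a_i>\sum b_i$, or the degrees are equal and the rightmost nonzero entry of $a-b$ is negative. *)

theory Defs
  imports Complex_Main "HOL-Library.Poly_Mapping"
begin

text \<open>Variables x_ij are indexed by pairs (i,j) of naturals; monomials are exponent
  vectors (finitely supported maps variable => nat); polynomials are finitely supported maps
  monomial => complex, with the convolution product of Poly_Mapping.\<close>

type_synonym variable = "nat \<times> nat"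
type_synonym monomial = "variable \<Rightarrow>\<^sub>0 nat"
type_synonym cpolynomial = "monomial \<Rightarrow>\<^sub>0 complex"

definition Vars :: "nat \<Rightarrow> variable set" where
  "Vars n = {(i, j). i \<in> {1..n+1} \<and> j \<in> {1..n+1} \<and> i \<noteq> j}"

definition Ring :: "nat \<Rightarrow> cpolynomial set" where
  "Ring n = {f. \<forall>m \<in> Poly_Mapping.keys f. Poly_Mapping.keys m \<subseteq> Vars n}"

definition Var :: "variable \<Rightarrow> cpolynomial" where
  "Var v = Poly_Mapping.single (Poly_Mapping.single v 1) 1"

definition Xentry :: "nat \<Rightarrow> nat \<Rightarrow> cpolynomial" where
  "Xentry i j = (if i = j then 0 else Var (i, j))"

definition minors2 :: "nat \<Rightarrow> cpolynomial set" where
  "minors2 n = {Xentry i j * Xentry i' j' - Xentry i j' * Xentry i' j | i i' j j'.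
      1 \<le> i \<and> i < i' \<and> i' \<le> n + 1 \<and> 1 \<le> j \<and> j < j' \<and> j' \<le> n + 1}"

definition ideal_gen :: "nat \<Rightarrow> cpolynomial set \<Rightarrow> cpolynomial set" where
  "ideal_gen n G = {(\<Sum>g\<in>F. c g * g) | F c. finite F \<and> F \<subseteq> G \<and> (\<forall>g\<in>F. c g \<in> Ring n)}"

definition mdeg :: "monomial \<Rightarrow> nat" where
  "mdeg a = (\<Sum>v\<in>Poly_Mapping.keys a. Poly_Mapping.lookup a v)"

text \<open>Degree reverse lexicographic order for the variable ordering given by the list vs,
  vs!0 > vs!1 > ... > vs!(N-1): a > b iff deg a > deg b, or degrees are equal and the
  rightmost nonzero entry of a - b is negative.\<close>
definition drl_greater :: "variable list \<Rightarrow> monomial \<Rightarrow> monomial \<Rightarrow> bool" where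
  "drl_greater vs a b \<longleftrightarrow> mdeg a > mdeg b \<or>
     (mdeg a = mdeg b \<and> (\<exists>k < length vs. Poly_Mapping.lookup a (vs ! k) < Poly_Mapping.lookup b (vs ! k) \<and>
        (\<forall>l. k < l \<and> l < length vs \<longrightarrow> Poly_Mapping.lookup a (vs ! l) = Poly_Mapping.lookup b (vs ! l))))"

definition is_lead_monom :: "variable list \<Rightarrow> cpolynomial \<Rightarrow> monomial \<Rightarrow> bool" where
  "is_lead_monom vs f m \<longleftrightarrow> m \<in> Poly_Mapping.keys f \<and> (\<forall>m' \<in> Poly_Mapping.keys f. m' \<noteq> m \<longrightarrow> drl_greater vs m m')"

definition monom_dvd :: "monomial \<Rightarrow> monomial \<Rightarrow> bool" where
  "monom_dvd a b \<longleftrightarrow> (\<forall>v. Poly_Mapping.lookup a v \<le> Poly_Mapping.lookup b v)"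

definition is_groebner_basis :: "nat \<Rightarrow> variable list \<Rightarrow> cpolynomial set \<Rightarrow> bool" where
  "is_groebner_basis n vs G \<longleftrightarrow>
     (\<forall>f \<in> ideal_gen n G. f \<noteq> 0 \<longrightarrow>
        (\<exists>g \<in> G. \<exists>mf mg. is_lead_monom vs f mf \<and> is_lead_monom vs g mg \<and> monom_dvd mg mf))"

end

theory Submission
  imports Defs
begin


lemma lookup_mult_single_at:
  fixes c :: cpolynomial
  shows "Poly_Mapping.lookup (c * Poly_Mapping.single A 1) (u + A) = Poly_Mapping.lookup c u"
proof -
  have "Poly_Mapping.lookup (c * Poly_Mapping.single A 1) (u + A)
      = (\<Sum>l. Poly_Mapping.lookup c l * (\<Sum>q. (1 when A = q) when u + A = l + q))"
    by (simp add: lookup_mult lookup_single)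
  also have "\<dots> = (\<Sum>l. (Poly_Mapping.lookup c l when l = u))"
  proof (rule Sum_any.cong)
    fix l
    have "(\<lambda>q. (1::complex) when A = q when u + A = l + q) = (\<lambda>q. (1 when u + A = l + A) when A = q)"
      by (auto simp: when_def)
    then have "(\<Sum>q. (1::complex) when A = q when u + A = l + q) = (1 when u + A = l + A)"
      by (simp only: Sum_any_when_equal')
    then show "Poly_Mapping.lookup c l * (\<Sum>q. (1 when A = q) when u + A = l + q) = (Poly_Mapping.lookup c l when l = u)"
      by (auto simp: when_def)
  qed
  also have "\<dots> = Poly_Mapping.lookup c u" by simp
  finally show ?thesis .
qed

lemma keys_mult_single:
  fixes c :: cpolynomial
  shows "Poly_Mapping.keys (c * Poly_Mapping.single A 1) \<subseteq> (\<lambda>u. u + A) ` Poly_Mapping.keys c"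
  using keys_mult[of c "Poly_Mapping.single A 1"] by auto

definition lam :: "monomial set \<Rightarrow> cpolynomial \<Rightarrow> complex" where
  "lam F f = (\<Sum>m\<in>Poly_Mapping.keys f \<inter> F. Poly_Mapping.lookup f m)"

lemma lam_superset:
  assumes "finite S" "Poly_Mapping.keys f \<subseteq> S"
  shows "lam F f = (\<Sum>m\<in>S \<inter> F. Poly_Mapping.lookup f m)"
  unfolding lam_def
  by (rule sum.mono_neutral_left) (use assms in \<open>auto simp: in_keys_iff\<close>)

lemma lam_add: "lam F (f + g) = lam F f + lam F g"
proof -
  let ?S = "Poly_Mapping.keys f \<union> Poly_Mapping.keys g"
  have "Poly_Mapping.keys (f + g) \<subseteq> ?S" by (rule keys_add)
  then have "lam F (f + g) = (\<Sum>m\<in>?S \<inter> F. Poly_Mapping.lookup (f + g) m)"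
    by (intro lam_superset) auto
  also have "\<dots> = (\<Sum>m\<in>?S \<inter> F. Poly_Mapping.lookup f m) + (\<Sum>m\<in>?S \<inter> F. Poly_Mapping.lookup g m)"
    by (simp add: lookup_add sum.distrib)
  also have "\<dots> = lam F f + lam F g"
    by (subst (1 2) lam_superset[where S = ?S]) auto
  finally show ?thesis .
qed

lemma lam_uminus: "lam F (- f) = - lam F f"
  unfolding lam_def by (simp add: sum_negf)

lemma lam_diff: "lam F (f - g) = lam F f - lam F g"
  using lam_add[of F f "- g"] lam_uminus[of F g] by simp

lemma lam_zero [simp]: "lam F 0 = 0"
  unfolding lam_def by simp

lemma lam_sum: "lam F (\<Sum>x\<in>X. h x) = (\<Sum>x\<in>X. lam F (h x))"
proof (induction X rule: infinite_finite_induct)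
  case (insert x X)
  then show ?case by (simp add: lam_add)
qed auto

lemma lam_mult_single:
  fixes c :: cpolynomial
  shows "lam F (c * Poly_Mapping.single A 1) = (\<Sum>u\<in>{u\<in>Poly_Mapping.keys c. u + A \<in> F}. Poly_Mapping.lookup c u)"
proof -
  let ?S = "(\<lambda>u. u + A) ` Poly_Mapping.keys c"
  have "lam F (c * Poly_Mapping.single A 1) = (\<Sum>m\<in>?S \<inter> F. Poly_Mapping.lookup (c * Poly_Mapping.single A 1) m)"
    by (rule lam_superset) (auto intro: keys_mult_single[THEN subsetD])
  also have "?S \<inter> F = (\<lambda>u. u + A) ` {u\<in>Poly_Mapping.keys c. u + A \<in> F}" by auto
  also have "(\<Sum>m\<in>(\<lambda>u. u + A) ` {u\<in>Poly_Mapping.keys c. u + A \<in> F}. Poly_Mapping.lookup (c * Poly_Mapping.single A 1) m)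
     = (\<Sum>u\<in>{u\<in>Poly_Mapping.keys c. u + A \<in> F}. Poly_Mapping.lookup (c * Poly_Mapping.single A 1) (u + A))"
    by (rule sum.reindex_cong[where l = "\<lambda>u. u + A"]) (auto simp: inj_on_def)
  also have "\<dots> = (\<Sum>u\<in>{u\<in>Poly_Mapping.keys c. u + A \<in> F}. Poly_Mapping.lookup c u)"
    by (simp add: lookup_mult_single_at)
  finally show ?thesis .
qed



abbreviation mon :: "variable \<Rightarrow> monomial" where "mon v \<equiv> Poly_Mapping.single v 1"

definition rowdeg :: "monomial \<Rightarrow> nat \<Rightarrow> nat" where
  "rowdeg m a = (\<Sum>v\<in>{v\<in>Poly_Mapping.keys m. fst v = a}. Poly_Mapping.lookup m v)"
definition coldeg :: "monomial \<Rightarrow> nat \<Rightarrow> nat" where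
  "coldeg m a = (\<Sum>v\<in>{v\<in>Poly_Mapping.keys m. snd v = a}. Poly_Mapping.lookup m v)"

lemma gsum_superset:
  fixes m :: monomial
  assumes "finite S" "Poly_Mapping.keys m \<subseteq> S"
  shows "(\<Sum>v\<in>{v\<in>Poly_Mapping.keys m. P v}. Poly_Mapping.lookup m v) = (\<Sum>v\<in>{v\<in>S. P v}. Poly_Mapping.lookup m v)"
  by (rule sum.mono_neutral_left) (use assms in \<open>auto simp: in_keys_iff\<close>)

lemma gsum_add:
  fixes ma mb :: monomial
  shows "(\<Sum>v\<in>{v\<in>Poly_Mapping.keys (ma + mb). P v}. Poly_Mapping.lookup (ma + mb) v)
    = (\<Sum>v\<in>{v\<in>Poly_Mapping.keys ma. P v}. Poly_Mapping.lookup ma v) + (\<Sum>v\<in>{v\<in>Poly_Mapping.keys mb. P v}. Poly_Mapping.lookup mb v)"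
proof -
  let ?S = "Poly_Mapping.keys ma \<union> Poly_Mapping.keys mb"
  have "Poly_Mapping.keys (ma + mb) \<subseteq> ?S" by (rule keys_add)
  then show ?thesis
    by (subst (1 2 3) gsum_superset[where S = ?S]) (auto simp: lookup_add sum.distrib)
qed

lemma rowdeg_add: "rowdeg (ma + mb) a = rowdeg ma a + rowdeg mb a"
  unfolding rowdeg_def by (rule gsum_add)
lemma coldeg_add: "coldeg (ma + mb) a = coldeg ma a + coldeg mb a"
  unfolding coldeg_def by (rule gsum_add)
lemma mdeg_add: "mdeg (ma + mb) = mdeg ma + mdeg mb"
  unfolding mdeg_def using gsum_add[where P="\<lambda>_. True" and ma=ma and mb=mb] by simp

lemma rowdeg_mon [simp]: "rowdeg (mon v) a = (if fst v = a then 1 else 0)"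
proof -
  have "{w\<in>{v}. fst w = a} = (if fst v = a then {v} else {})" by auto
  then show ?thesis unfolding rowdeg_def by simp
qed
lemma coldeg_mon [simp]: "coldeg (mon v) a = (if snd v = a then 1 else 0)"
proof -
  have "{w\<in>{v}. snd w = a} = (if snd v = a then {v} else {})" by auto
  then show ?thesis unfolding coldeg_def by simp
qed
lemma mdeg_mon [simp]: "mdeg (mon v) = 1"
  unfolding mdeg_def by auto

lemma mon_Suc0: "Poly_Mapping.single v (Suc 0) = mon v" by simp
lemma rowdeg_mon' [simp]: "rowdeg (Poly_Mapping.single v (Suc 0)) a = (if fst v = a then 1 else 0)"
  using rowdeg_mon by simp
lemma coldeg_mon' [simp]: "coldeg (Poly_Mapping.single v (Suc 0)) a = (if snd v = a then 1 else 0)"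
  using coldeg_mon by simp
lemma mdeg_mon' [simp]: "mdeg (Poly_Mapping.single v (Suc 0)) = 1"
  using mdeg_mon by simp

lemma Var_mult: "Var v * Var w = Poly_Mapping.single (mon v + mon w) 1"
  unfolding Var_def by (simp add: mult_single)

lemma Xprod: "Xentry a b * Xentry c d = (if a = b \<or> c = d then 0 else Poly_Mapping.single (mon (a,b) + mon (c,d)) 1)"
  unfolding Xentry_def by (simp add: Var_mult)

definition Fib :: "monomial \<Rightarrow> monomial set" where
  "Fib m = {m'. mdeg m' = mdeg m \<and> (\<forall>a. rowdeg m' a = rowdeg m a \<and> coldeg m' a = coldeg m a)}"

lemma lam_bad:
  assumes bip: "\<forall>a. rowdeg m a = 0 \<or> coldeg m a = 0"
    and t: "fst x = t \<or> fst y = t" "snd x = t \<or> snd y = t"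
  shows "lam (Fib m) (c * Poly_Mapping.single (mon x + mon y) 1) = 0"
proof -
  have E: "{u\<in>Poly_Mapping.keys c. u + (mon x + mon y) \<in> Fib m} = {}"
  proof (safe)
    fix u assume "u + (mon x + mon y) \<in> Fib m"
    then have "rowdeg m t = rowdeg (u + (mon x + mon y)) t" "coldeg m t = coldeg (u + (mon x + mon y)) t"
      unfolding Fib_def by auto
    moreover have "rowdeg (u + (mon x + mon y)) t > 0" "coldeg (u + (mon x + mon y)) t > 0"
      using t by (simp_all only: rowdeg_add coldeg_add rowdeg_mon coldeg_mon, auto)
    ultimately have "rowdeg m t > 0" "coldeg m t > 0" by simp_all
    then show "u \<in> {}" using bip[rule_format, of t] by simp
  qed
  show ?thesis unfolding lam_mult_single E by simp
qed

lemma lam_same: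
  assumes "mdeg A = mdeg B" "rowdeg A = rowdeg B" "coldeg A = coldeg B"
  shows "lam (Fib m) (c * Poly_Mapping.single A 1) = lam (Fib m) (c * Poly_Mapping.single B 1)"
proof -
  have "{u\<in>Poly_Mapping.keys c. u + A \<in> Fib m} = {u\<in>Poly_Mapping.keys c. u + B \<in> Fib m}"
    using assms by (auto simp: Fib_def rowdeg_add coldeg_add mdeg_add)
  then show ?thesis by (simp add: lam_mult_single)
qed

lemma lam_minor:
  assumes bip: "\<forall>a. rowdeg m a = 0 \<or> coldeg m a = 0"
    and g: "g \<in> minors2 n"
  shows "lam (Fib m) (c * g) = 0"
proof -
  obtain i i' j j' where ij: "i < i'" "j < j'"
    and gdef: "g = Xentry i j * Xentry i' j' - Xentry i j' * Xentry i' j"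
    using g unfolding minors2_def by auto
  have cg: "c * g = c * (Xentry i j * Xentry i' j') - c * (Xentry i j' * Xentry i' j)"
    by (simp add: gdef right_diff_distrib)
  show ?thesis
  proof (cases "i = j \<or> i' = j' \<or> i = j' \<or> i' = j")
    case True
    have L1: "lam (Fib m) (c * (Xentry i j * Xentry i' j')) = 0"
    proof (cases "i = j \<or> i' = j'")
      case True then show ?thesis by (simp add: Xprod)
    next
      case False
      then have "lam (Fib m) (c * Poly_Mapping.single (mon (i,j) + mon (i',j')) 1) = 0"
      proof (cases "i = j'")
        case True then show ?thesis by (intro lam_bad[OF bip, where t = i]) auto
      next
        case F2: False
        with \<open>i = j \<or> i' = j' \<or> i = j' \<or> i' = j\<close> False have "i' = j" by blast
        then show ?thesis by (intro lam_bad[OF bip, where t = i']) auto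
      qed
      with False show ?thesis by (simp add: Xprod)
    qed
    have L2: "lam (Fib m) (c * (Xentry i j' * Xentry i' j)) = 0"
    proof (cases "i = j' \<or> i' = j")
      case True then show ?thesis by (simp add: Xprod)
    next
      case False
      then have "lam (Fib m) (c * Poly_Mapping.single (mon (i,j') + mon (i',j)) 1) = 0"
      proof (cases "i = j")
        case True then show ?thesis by (intro lam_bad[OF bip, where t = i]) auto
      next
        case F2: False
        with \<open>i = j \<or> i' = j' \<or> i = j' \<or> i' = j\<close> False have "i' = j'" by blast
        then show ?thesis by (intro lam_bad[OF bip, where t = i']) auto
      qed
      with False show ?thesis by (simp add: Xprod)
    qed
    show ?thesis unfolding cg lam_diff L1 L2 by simp
  next
    case False
    then show ?thesis unfolding cg lam_diff Xprod
      by (auto intro!: lam_same simp: mdeg_add rowdeg_add coldeg_add fun_eq_iff)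
  qed
qed



lemma drl_total:
  assumes "Poly_Mapping.keys a \<subseteq> set vs" "Poly_Mapping.keys b \<subseteq> set vs" "a \<noteq> b"
  shows "drl_greater vs a b \<or> drl_greater vs b a"
proof (cases "mdeg a = mdeg b")
  case False then show ?thesis unfolding drl_greater_def by auto
next
  case True
  let ?K = "{k. k < length vs \<and> Poly_Mapping.lookup a (vs ! k) \<noteq> Poly_Mapping.lookup b (vs ! k)}"
  obtain v where v: "Poly_Mapping.lookup a v \<noteq> Poly_Mapping.lookup b v"
    using assms(3) by (auto simp: poly_mapping_eq_iff fun_eq_iff)
  then have "v \<in> Poly_Mapping.keys a \<union> Poly_Mapping.keys b" by (auto simp: in_keys_iff)
  then have "v \<in> set vs" using assms by auto
  then obtain k where "k < length vs" "vs ! k = v" by (auto simp: in_set_conv_nth)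
  with v have ne: "?K \<noteq> {}" by auto
  have fin: "finite ?K" by auto
  define k0 where "k0 = Max ?K"
  have k0: "k0 \<in> ?K" unfolding k0_def using Max_in[OF fin ne] .
  have above: "\<forall>l. k0 < l \<and> l < length vs \<longrightarrow> Poly_Mapping.lookup a (vs ! l) = Poly_Mapping.lookup b (vs ! l)"
  proof (intro allI impI)
    fix l assume l: "k0 < l \<and> l < length vs"
    show "Poly_Mapping.lookup a (vs ! l) = Poly_Mapping.lookup b (vs ! l)"
    proof (rule ccontr)
      assume "Poly_Mapping.lookup a (vs ! l) \<noteq> Poly_Mapping.lookup b (vs ! l)"
      with l have "l \<in> ?K" by simp
      then have "l \<le> k0" unfolding k0_def using Max_ge[OF fin] by blast
      with l show False by simp
    qed
  qed
  from k0 have "Poly_Mapping.lookup a (vs ! k0) < Poly_Mapping.lookup b (vs ! k0) \<or> Poly_Mapping.lookup b (vs ! k0) < Poly_Mapping.lookup a (vs ! k0)"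
    by auto
  then show ?thesis
  proof
    assume "Poly_Mapping.lookup a (vs ! k0) < Poly_Mapping.lookup b (vs ! k0)"
    then have "drl_greater vs a b" unfolding drl_greater_def
      using True k0 above by (intro disjI2 conjI exI[of _ k0]) auto
    then show ?thesis ..
  next
    assume "Poly_Mapping.lookup b (vs ! k0) < Poly_Mapping.lookup a (vs ! k0)"
    then have "drl_greater vs b a" unfolding drl_greater_def
      using True k0 above by (intro disjI2 conjI exI[of _ k0]) auto
    then show ?thesis ..
  qed
qed

lemma drl_asym:
  assumes "drl_greater vs a b" shows "\<not> drl_greater vs b a"
proof
  assume ba: "drl_greater vs b a"
  from assms ba have deq: "mdeg a = mdeg b" unfolding drl_greater_def by auto
  from assms deq obtain k1 where k1: "k1 < length vs" "Poly_Mapping.lookup a (vs ! k1) < Poly_Mapping.lookup b (vs ! k1)"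
    "\<forall>l. k1 < l \<and> l < length vs \<longrightarrow> Poly_Mapping.lookup a (vs ! l) = Poly_Mapping.lookup b (vs ! l)"
    unfolding drl_greater_def by auto
  from ba deq obtain k2 where k2: "k2 < length vs" "Poly_Mapping.lookup b (vs ! k2) < Poly_Mapping.lookup a (vs ! k2)"
    "\<forall>l. k2 < l \<and> l < length vs \<longrightarrow> Poly_Mapping.lookup b (vs ! l) = Poly_Mapping.lookup a (vs ! l)"
    unfolding drl_greater_def by auto
  show False
  proof (cases k1 k2 rule: linorder_cases)
    case less then show ?thesis using k1(3)[rule_format, of k2] k2(1,2) by simp
  next
    case equal then show ?thesis using k1 k2 by simp
  next
    case greater then show ?thesis using k2(3)[rule_format, of k1] k1(1,2) by simp
  qed
qed

lemma drl_trans: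
  assumes ab: "drl_greater vs a b" and bc: "drl_greater vs b c" shows "drl_greater vs a c"
proof (cases "mdeg a = mdeg b \<and> mdeg b = mdeg c")
  case False
  then show ?thesis using ab bc unfolding drl_greater_def by auto
next
  case True
  from ab True obtain k1 where k1: "k1 < length vs" "Poly_Mapping.lookup a (vs ! k1) < Poly_Mapping.lookup b (vs ! k1)"
    "\<forall>l. k1 < l \<and> l < length vs \<longrightarrow> Poly_Mapping.lookup a (vs ! l) = Poly_Mapping.lookup b (vs ! l)"
    unfolding drl_greater_def by auto
  from bc True obtain k2 where k2: "k2 < length vs" "Poly_Mapping.lookup b (vs ! k2) < Poly_Mapping.lookup c (vs ! k2)"
    "\<forall>l. k2 < l \<and> l < length vs \<longrightarrow> Poly_Mapping.lookup b (vs ! l) = Poly_Mapping.lookup c (vs ! l)"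
    unfolding drl_greater_def by auto
  show ?thesis
  proof (cases k1 k2 rule: linorder_cases)
    case less
    then have "Poly_Mapping.lookup a (vs ! k2) < Poly_Mapping.lookup c (vs ! k2)"
      using k1(3)[rule_format, of k2] k2(1,2) by simp
    moreover have "\<forall>l. k2 < l \<and> l < length vs \<longrightarrow> Poly_Mapping.lookup a (vs ! l) = Poly_Mapping.lookup c (vs ! l)"
      using k1(3) k2(3) less by (metis order.strict_trans)
    ultimately show ?thesis unfolding drl_greater_def using True k2(1) by auto
  next
    case equal
    then have "Poly_Mapping.lookup a (vs ! k1) < Poly_Mapping.lookup c (vs ! k1)"
      using k1(2) k2(2) by simp
    moreover have "\<forall>l. k1 < l \<and> l < length vs \<longrightarrow> Poly_Mapping.lookup a (vs ! l) = Poly_Mapping.lookup c (vs ! l)"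
      using k1(3) k2(3) equal by metis
    ultimately show ?thesis unfolding drl_greater_def using True k1(1) by auto
  next
    case greater
    then have "Poly_Mapping.lookup a (vs ! k1) < Poly_Mapping.lookup c (vs ! k1)"
      using k2(3)[rule_format, of k1] k1(1,2) by simp
    moreover have "\<forall>l. k1 < l \<and> l < length vs \<longrightarrow> Poly_Mapping.lookup a (vs ! l) = Poly_Mapping.lookup c (vs ! l)"
      using k1(3) k2(3) greater by (metis order.strict_trans)
    ultimately show ?thesis unfolding drl_greater_def using True k1(1) by auto
  qed
qed

lemma exists_lead:
  assumes "finite S" "S \<noteq> {}" "\<forall>x\<in>S. Poly_Mapping.keys x \<subseteq> set vs"
  shows "\<exists>c\<in>S. \<forall>x\<in>S. x \<noteq> c \<longrightarrow> drl_greater vs c x"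
  using assms
proof (induction S rule: finite_ne_induct)
  case (singleton x) then show ?case by auto
next
  case (insert x S)
  then obtain c where c: "c \<in> S" "\<forall>y\<in>S. y \<noteq> c \<longrightarrow> drl_greater vs c y" by auto
  show ?case
  proof (cases "x = c \<or> drl_greater vs c x")
    case True then show ?thesis using c by auto
  next
    case False
    then have "drl_greater vs x c" using drl_total[of c vs x] insert c by auto
    then show ?thesis using c drl_trans by (intro bexI[of _ x]) auto
  qed
qed



lemma Ring_add: "f \<in> Ring n \<Longrightarrow> g \<in> Ring n \<Longrightarrow> f + g \<in> Ring n"
  unfolding Ring_def
proof (intro CollectI ballI)
  fix m assume f: "f \<in> {f. \<forall>m\<in>Poly_Mapping.keys f. Poly_Mapping.keys m \<subseteq> Vars n}"
    and g: "g \<in> {f. \<forall>m\<in>Poly_Mapping.keys f. Poly_Mapping.keys m \<subseteq> Vars n}"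
    and m: "m \<in> Poly_Mapping.keys (f + g)"
  from m have "m \<in> Poly_Mapping.keys f \<or> m \<in> Poly_Mapping.keys g" using keys_add[of f g] by (rule_tac ccontr) auto
  then show "Poly_Mapping.keys m \<subseteq> Vars n" using f g by auto
qed

lemma Ring_uminus: "f \<in> Ring n \<Longrightarrow> - f \<in> Ring n"
  unfolding Ring_def by simp

lemma Ring_diff: "f \<in> Ring n \<Longrightarrow> g \<in> Ring n \<Longrightarrow> f - g \<in> Ring n"
  using Ring_add[of f n "- g"] Ring_uminus[of g n] by simp

lemma Ring_zero: "0 \<in> Ring n"
  unfolding Ring_def by simp

lemma Ring_mult: "f \<in> Ring n \<Longrightarrow> g \<in> Ring n \<Longrightarrow> f * g \<in> Ring n"
proof -
  assume f: "f \<in> Ring n" and g: "g \<in> Ring n"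
  show "f * g \<in> Ring n" unfolding Ring_def
  proof (intro CollectI ballI)
    fix m assume "m \<in> Poly_Mapping.keys (f * g)"
    then have "m \<in> {a + b | a b. a \<in> Poly_Mapping.keys f \<and> b \<in> Poly_Mapping.keys g}"
      using keys_mult[of f g] by (rule subsetD[rotated])
    then obtain a b where ab: "m = a + b" "a \<in> Poly_Mapping.keys f" "b \<in> Poly_Mapping.keys g"
      by blast
    have "Poly_Mapping.keys a \<subseteq> Vars n" "Poly_Mapping.keys b \<subseteq> Vars n"
      using f g ab unfolding Ring_def by auto
    then show "Poly_Mapping.keys m \<subseteq> Vars n"
      unfolding ab(1) using keys_add[of a b] by (meson le_sup_iff order_trans)
  qed
qed

lemma Ring_sum: "(\<And>x. x \<in> X \<Longrightarrow> h x \<in> Ring n) \<Longrightarrow> (\<Sum>x\<in>X. h x) \<in> Ring n"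
proof (induction X rule: infinite_finite_induct)
  case (infinite A) then show ?case by (simp add: Ring_zero)
next
  case empty then show ?case by (simp add: Ring_zero)
next
  case (insert x F) then show ?case by (simp add: Ring_add)
qed

lemma Xentry_Ring: "a \<in> {1..n+1} \<Longrightarrow> b \<in> {1..n+1} \<Longrightarrow> Xentry a b \<in> Ring n"
  unfolding Xentry_def Var_def Ring_def Vars_def by auto

lemma minors_Ring: "g \<in> minors2 n \<Longrightarrow> g \<in> Ring n"
proof -
  assume "g \<in> minors2 n"
  then obtain i i' j j' where "g = Xentry i j * Xentry i' j' - Xentry i j' * Xentry i' j"
    "1 \<le> i" "i < i'" "i' \<le> n + 1" "1 \<le> j" "j < j'" "j' \<le> n + 1"
    unfolding minors2_def by blast
  then show ?thesis by (simp add: Ring_diff Ring_mult Xentry_Ring)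
qed

lemma ideal_Ring: "f \<in> ideal_gen n (minors2 n) \<Longrightarrow> f \<in> Ring n"
proof -
  assume "f \<in> ideal_gen n (minors2 n)"
  then obtain F c where "f = (\<Sum>g\<in>F. c g * g)" "F \<subseteq> minors2 n" "\<forall>g\<in>F. c g \<in> Ring n"
    unfolding ideal_gen_def by blast
  note * = this
  have "c g * g \<in> Ring n" if "g \<in> F" for g
    using that * minors_Ring[of g n] Ring_mult[of "c g" n g] by blast
  then show ?thesis unfolding *(1) by (rule Ring_sum)
qed



lemma lookup_mon2: "Poly_Mapping.lookup (mon x + mon y) v = (if x = v then 1 else 0) + (if y = v then 1 else 0)"
  by (simp add: lookup_add lookup_single when_def)

lemma keys_mon2: "Poly_Mapping.keys (mon x + mon y) \<subseteq> {x, y}"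
  using keys_add[of "mon x" "mon y"] by auto

lemma mdeg_mon2: "mdeg (mon x + mon y) = 2"
  by (simp add: mdeg_add)

lemma is_lead_uminus: "is_lead_monom vs (- g) m = is_lead_monom vs g m"
  unfolding is_lead_monom_def by simp

definition Dm :: "nat \<Rightarrow> nat \<Rightarrow> nat \<Rightarrow> nat \<Rightarrow> cpolynomial" where
  "Dm a a' b b' = Xentry a b * Xentry a' b' - Xentry a b' * Xentry a' b"

lemma Dm_swap1: "Dm a' a b b' = - Dm a a' b b'"
  unfolding Dm_def by (simp add: algebra_simps)
lemma Dm_swap2: "Dm a a' b' b = - Dm a a' b b'"
  unfolding Dm_def by (simp add: algebra_simps)

lemma Dm_lead:
  assumes V: "set vs = Vars n"
    and rng: "p \<in> {1..n+1}" "p' \<in> {1..n+1}" "q \<in> {1..n+1}" "q' \<in> {1..n+1}"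
    and ne: "p \<noteq> p'" "q \<noteq> q'" "p \<noteq> q'" "p' \<noteq> q"
    and cond: "p = q \<or> p' = q' \<or> (\<exists>kz<length vs. vs ! kz = (p,q) \<and>
        (\<forall>l. kz < l \<and> l < length vs \<longrightarrow> vs ! l \<noteq> (p,q') \<and> vs ! l \<noteq> (p',q)))"
  shows "is_lead_monom vs (Dm p p' q q') (mon (p,q') + mon (p',q))"
proof -
  define A where "A = mon (p,q') + mon (p',q)"
  have P2: "Xentry p q' * Xentry p' q = Poly_Mapping.single A 1"
    using ne by (simp add: Xprod A_def)
  show ?thesis
  proof (cases "p = q \<or> p' = q'")
    case True
    then have "Dm p p' q q' = - Poly_Mapping.single A 1"
      unfolding Dm_def P2 by (auto simp: Xprod)
    then show ?thesis unfolding A_def[symmetric] is_lead_monom_def by simp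
  next
    case False
    define B where "B = mon (p,q) + mon (p',q')"
    have D: "Dm p p' q q' = Poly_Mapping.single B 1 - Poly_Mapping.single A 1"
      unfolding Dm_def P2 using False by (simp add: Xprod B_def)
    have lA: "Poly_Mapping.lookup A v = (if (p,q') = v then 1 else 0) + (if (p',q) = v then 1 else 0)" for v
      unfolding A_def by (rule lookup_mon2)
    have lB: "Poly_Mapping.lookup B v = (if (p,q) = v then 1 else 0) + (if (p',q') = v then 1 else 0)" for v
      unfolding B_def by (rule lookup_mon2)
    have AB: "A \<noteq> B"
    proof
      assume "A = B"
      then have "Poly_Mapping.lookup A (p,q) = Poly_Mapping.lookup B (p,q)" by simp
      then show False using ne by (simp add: lA lB)
    qed
    have keysD: "Poly_Mapping.keys (Dm p p' q q') \<subseteq> {A, B}"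
      unfolding D using keys_diff[of "Poly_Mapping.single B 1" "Poly_Mapping.single A (1::complex)"] by auto
    have AinD: "A \<in> Poly_Mapping.keys (Dm p p' q q')"
      unfolding D in_keys_iff using AB by (simp add: lookup_minus lookup_single when_def)
    have kA: "Poly_Mapping.keys A \<subseteq> set vs"
      using keys_mon2[of "(p,q')" "(p',q)"] rng ne unfolding A_def V Vars_def by auto
    have kB: "Poly_Mapping.keys B \<subseteq> set vs"
      using keys_mon2[of "(p,q)" "(p',q')"] rng ne False unfolding B_def V Vars_def by auto
    have notBA: "\<not> drl_greater vs B A"
    proof
      assume "drl_greater vs B A"
      moreover have "mdeg A = mdeg B" unfolding A_def B_def mdeg_mon2 ..
      ultimately obtain k where k: "k < length vs" "Poly_Mapping.lookup B (vs ! k) < Poly_Mapping.lookup A (vs ! k)"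
        "\<forall>l. k < l \<and> l < length vs \<longrightarrow> Poly_Mapping.lookup B (vs ! l) = Poly_Mapping.lookup A (vs ! l)"
        unfolding drl_greater_def by auto
      from k(2) have vk: "vs ! k = (p,q') \<or> vs ! k = (p',q)"
        by (auto simp: lA lB split: if_splits)
      from cond False obtain kz where kz: "kz < length vs" "vs ! kz = (p,q)"
        "\<forall>l. kz < l \<and> l < length vs \<longrightarrow> vs ! l \<noteq> (p,q') \<and> vs ! l \<noteq> (p',q)" by blast
      show False
      proof (cases k kz rule: linorder_cases)
        case less
        with k(3) kz(1) have "Poly_Mapping.lookup B (vs ! kz) = Poly_Mapping.lookup A (vs ! kz)" by blast
        then show False using kz(2) ne by (simp add: lA lB)
      next
        case equal then show False using vk kz(2) ne by auto
      next
        case greater then show False using vk kz(3) k(1) by blast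
      qed
    qed
    have "drl_greater vs A B" using drl_total[OF kA kB AB] notBA by blast
    then show ?thesis unfolding is_lead_monom_def A_def[symmetric] using keysD AinD by auto
  qed
qed



lemma minor_lead:
  assumes V: "set vs = Vars n"
    and rng: "p \<in> {1..n+1}" "p' \<in> {1..n+1}" "q \<in> {1..n+1}" "q' \<in> {1..n+1}"
    and ne: "p \<noteq> p'" "q \<noteq> q'" "p \<noteq> q'" "p' \<noteq> q"
    and cond: "p = q \<or> p' = q' \<or> (\<exists>kz<length vs. vs ! kz = (p,q) \<and>
        (\<forall>l. kz < l \<and> l < length vs \<longrightarrow> vs ! l \<noteq> (p,q') \<and> vs ! l \<noteq> (p',q)))"
  shows "\<exists>g\<in>minors2 n. is_lead_monom vs g (mon (p,q') + mon (p',q))"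
proof -
  have L: "is_lead_monom vs (Dm p p' q q') (mon (p,q') + mon (p',q))"
    by (rule Dm_lead[OF assms])
  have mem: "Dm a a' b b' \<in> minors2 n" if "1 \<le> a" "a < a'" "a' \<le> n+1" "1 \<le> b" "b < b'" "b' \<le> n+1" for a a' b b'
    unfolding minors2_def Dm_def using that by blast
  consider "p < p'" "q < q'" | "p < p'" "q' < q" | "p' < p" "q < q'" | "p' < p" "q' < q"
    using ne by linarith
  then show ?thesis
  proof cases
    case 1
    have "Dm p p' q q' \<in> minors2 n" using 1 rng by (intro mem) auto
    then show ?thesis using L by metis
  next
    case 2
    have "Dm p p' q' q \<in> minors2 n" using 2 rng by (intro mem) auto
    moreover have "Dm p p' q' q = - Dm p p' q q'" by (rule Dm_swap2)
    ultimately show ?thesis using L is_lead_uminus by metis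
  next
    case 3
    have "Dm p' p q q' \<in> minors2 n" using 3 rng by (intro mem) auto
    moreover have "Dm p' p q q' = - Dm p p' q q'" by (rule Dm_swap1)
    ultimately show ?thesis using L is_lead_uminus by metis
  next
    case 4
    have "Dm p' p q' q \<in> minors2 n" using 4 rng by (intro mem) auto
    moreover have "Dm p' p q' q = Dm p p' q q'" using Dm_swap1[of p' p q' q] Dm_swap2[of p p' q q'] by simp
    ultimately show ?thesis using L by metis
  qed
qed



lemma gsum_nonzero_ex:
  fixes m :: monomial
  assumes "(\<Sum>v\<in>{v\<in>Poly_Mapping.keys m. P v}. Poly_Mapping.lookup m v) \<noteq> 0"
  shows "\<exists>v\<in>Poly_Mapping.keys m. P v"
proof (rule ccontr)
  assume "\<not> ?thesis"
  then have "{v\<in>Poly_Mapping.keys m. P v} = {}" by auto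
  with assms show False by simp
qed

theorem corollary6p1:
  fixes n :: nat and vs :: "variable list"
  assumes "n \<ge> 1"
    and "distinct vs" and "set vs = Vars n"
  shows "is_groebner_basis n vs (minors2 n)"
  unfolding is_groebner_basis_def
proof (intro ballI impI)
  note V = assms(3)
  fix f assume fI: "f \<in> ideal_gen n (minors2 n)" and f0: "f \<noteq> 0"
  have fR: "f \<in> Ring n" using fI by (rule ideal_Ring)
  have kf: "\<forall>x\<in>Poly_Mapping.keys f. Poly_Mapping.keys x \<subseteq> set vs" using fR V unfolding Ring_def by auto
  obtain m where m: "m \<in> Poly_Mapping.keys f" "\<forall>x\<in>Poly_Mapping.keys f. x \<noteq> m \<longrightarrow> drl_greater vs m x"
    using exists_lead[of "Poly_Mapping.keys f" vs] f0 kf by auto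
  have LMf: "is_lead_monom vs f m" unfolding is_lead_monom_def using m by auto
  have mV: "Poly_Mapping.keys m \<subseteq> Vars n" using kf m(1) V by auto
  show "\<exists>g\<in>minors2 n. \<exists>mf mg. is_lead_monom vs f mf \<and> is_lead_monom vs g mg \<and> monom_dvd mg mf"
  proof (rule ccontr)
    assume H: "\<not> ?thesis"
    have H': "\<not> monom_dvd mg m" if "g \<in> minors2 n" "is_lead_monom vs g mg" for g mg
      using H LMf that by blast
    have dvd2: "monom_dvd (mon x + mon y) m" if "x \<in> Poly_Mapping.keys m" "y \<in> Poly_Mapping.keys m" "x \<noteq> y" for x y
      unfolding monom_dvd_def
    proof
      fix v
      show "Poly_Mapping.lookup (mon x + mon y) v \<le> Poly_Mapping.lookup m v"
        unfolding lookup_mon2 using that by (auto simp: in_keys_iff)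
    qed
    have noq: False if pq': "(p,q') \<in> Poly_Mapping.keys m" and p'q: "(p',q) \<in> Poly_Mapping.keys m"
      and ne: "p \<noteq> p'" "q \<noteq> q'"
      and cond: "p = q \<or> p' = q' \<or> (\<exists>kz<length vs. vs ! kz = (p,q) \<and>
        (\<forall>l. kz < l \<and> l < length vs \<longrightarrow> vs ! l \<noteq> (p,q') \<and> vs ! l \<noteq> (p',q)))" for p p' q q'
    proof -
      have v1: "(p,q') \<in> Vars n" and v2: "(p',q) \<in> Vars n" using pq' p'q mV by auto
      then have rng: "p \<in> {1..n+1}" "p' \<in> {1..n+1}" "q \<in> {1..n+1}" "q' \<in> {1..n+1}"
        and ne2: "p \<noteq> q'" "p' \<noteq> q" unfolding Vars_def by auto
      obtain g where g: "g \<in> minors2 n" "is_lead_monom vs g (mon (p,q') + mon (p',q))"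
        using minor_lead[OF V rng ne ne2 cond] by blast
      have "monom_dvd (mon (p,q') + mon (p',q)) m" using pq' p'q ne by (intro dvd2) auto
      with H'[OF g] show False by simp
    qed
    have bip: "\<forall>a. rowdeg m a = 0 \<or> coldeg m a = 0"
    proof (rule ccontr)
      assume "\<not> (\<forall>a. rowdeg m a = 0 \<or> coldeg m a = 0)"
      then obtain t where t: "rowdeg m t \<noteq> 0" "coldeg m t \<noteq> 0" by blast
      obtain v where v: "v \<in> Poly_Mapping.keys m" "fst v = t"
        using gsum_nonzero_ex[OF t(1)[unfolded rowdeg_def]] by blast
      obtain w where w: "w \<in> Poly_Mapping.keys m" "snd w = t"
        using gsum_nonzero_ex[OF t(2)[unfolded coldeg_def]] by blast
      obtain b where vb: "v = (t, b)" using v(2) by (cases v) auto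
      obtain c where wc: "w = (c, t)" using w(2) by (cases w) auto
      have "(t,b) \<in> Vars n" "(c,t) \<in> Vars n" using v(1) w(1) vb wc mV by auto
      then have "t \<noteq> c" "t \<noteq> b" unfolding Vars_def by auto
      then show False using noq[of t b c t] v(1) w(1) vb wc by auto
    qed
    have lam0: "lam (Fib m) f = 0"
    proof -
      obtain F c where Fc: "f = (\<Sum>g\<in>F. c g * g)" "F \<subseteq> minors2 n"
        using fI unfolding ideal_gen_def by blast
      have "lam (Fib m) f = (\<Sum>g\<in>F. lam (Fib m) (c g * g))" unfolding Fc(1) by (rule lam_sum)
      also have "\<dots> = 0" using Fc(2) lam_minor[OF bip] by (intro sum.neutral) blast
      finally show ?thesis .
    qed
    have only: "m' = m" if m': "m' \<in> Poly_Mapping.keys f" "m' \<in> Fib m" for m'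
    proof (rule ccontr)
      assume neq: "m' \<noteq> m"
      then have gr: "drl_greater vs m m'" using m(2) m'(1) by auto
      have Fm: "mdeg m' = mdeg m" "\<And>a. rowdeg m' a = rowdeg m a" "\<And>a. coldeg m' a = coldeg m a"
        using m'(2) unfolding Fib_def by auto
      obtain k where k: "k < length vs" "Poly_Mapping.lookup m (vs ! k) < Poly_Mapping.lookup m' (vs ! k)"
        "\<forall>l. k < l \<and> l < length vs \<longrightarrow> Poly_Mapping.lookup m (vs ! l) = Poly_Mapping.lookup m' (vs ! l)"
        using gr Fm(1) unfolding drl_greater_def by auto
      obtain p q where pq: "vs ! k = (p, q)" by (cases "vs ! k") auto
      let ?S = "Poly_Mapping.keys m \<union> Poly_Mapping.keys m'"
      have finS: "finite ?S" by simp
      have pqS: "(p,q) \<in> ?S" using k(2) pq by (auto simp: in_keys_iff)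
      have row: "\<exists>v. fst v = p \<and> v \<noteq> (p,q) \<and> Poly_Mapping.lookup m' v < Poly_Mapping.lookup m v"
      proof (rule ccontr)
        assume "\<not> ?thesis"
        then have le: "\<forall>v\<in>{v\<in>?S. fst v = p}. Poly_Mapping.lookup m v \<le> Poly_Mapping.lookup m' v"
          using k(2) pq by (metis (mono_tags, lifting) le_less_linear less_imp_le mem_Collect_eq)
        have "(\<Sum>v\<in>{v\<in>?S. fst v = p}. Poly_Mapping.lookup m v) < (\<Sum>v\<in>{v\<in>?S. fst v = p}. Poly_Mapping.lookup m' v)"
          by (rule sum_strict_mono_ex1) (use le pqS k(2) pq in auto)
        moreover have "rowdeg m p = (\<Sum>v\<in>{v\<in>?S. fst v = p}. Poly_Mapping.lookup m v)"
          unfolding rowdeg_def by (rule gsum_superset) auto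
        moreover have "rowdeg m' p = (\<Sum>v\<in>{v\<in>?S. fst v = p}. Poly_Mapping.lookup m' v)"
          unfolding rowdeg_def by (rule gsum_superset) auto
        ultimately show False using Fm(2)[of p] by simp
      qed
      then obtain v where v: "fst v = p" "v \<noteq> (p,q)" "Poly_Mapping.lookup m' v < Poly_Mapping.lookup m v" by blast
      obtain q' where vq': "v = (p, q')" using v(1) by (cases v) auto
      have col: "\<exists>v. snd v = q \<and> v \<noteq> (p,q) \<and> Poly_Mapping.lookup m' v < Poly_Mapping.lookup m v"
      proof (rule ccontr)
        assume "\<not> ?thesis"
        then have le: "\<forall>v\<in>{v\<in>?S. snd v = q}. Poly_Mapping.lookup m v \<le> Poly_Mapping.lookup m' v"
          using k(2) pq by (metis (mono_tags, lifting) le_less_linear less_imp_le mem_Collect_eq)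
        have "(\<Sum>v\<in>{v\<in>?S. snd v = q}. Poly_Mapping.lookup m v) < (\<Sum>v\<in>{v\<in>?S. snd v = q}. Poly_Mapping.lookup m' v)"
          by (rule sum_strict_mono_ex1) (use le pqS k(2) pq in auto)
        moreover have "coldeg m q = (\<Sum>v\<in>{v\<in>?S. snd v = q}. Poly_Mapping.lookup m v)"
          unfolding coldeg_def by (rule gsum_superset) auto
        moreover have "coldeg m' q = (\<Sum>v\<in>{v\<in>?S. snd v = q}. Poly_Mapping.lookup m' v)"
          unfolding coldeg_def by (rule gsum_superset) auto
        ultimately show False using Fm(3)[of q] by simp
      qed
      then obtain w where w: "snd w = q" "w \<noteq> (p,q)" "Poly_Mapping.lookup m' w < Poly_Mapping.lookup m w" by blast
      obtain p' where wp': "w = (p', q)" using w(1) by (cases w) auto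
      have in1: "(p,q') \<in> Poly_Mapping.keys m" using v(3) vq' by (auto simp: in_keys_iff)
      have in2: "(p',q) \<in> Poly_Mapping.keys m" using w(3) wp' by (auto simp: in_keys_iff)
      have ne: "p \<noteq> p'" "q \<noteq> q'" using v(2) vq' w(2) wp' by auto
      have "\<forall>l. k < l \<and> l < length vs \<longrightarrow> vs ! l \<noteq> (p,q') \<and> vs ! l \<noteq> (p',q)"
        using k(3) v(3) vq' w(3) wp' by (metis less_irrefl)
      then show False using noq[OF in1 in2 ne] k(1) pq by blast
    qed
    have "Poly_Mapping.keys f \<inter> Fib m = {m}"
      using only m(1) unfolding Fib_def by auto
    then have "lam (Fib m) f = Poly_Mapping.lookup f m" unfolding lam_def by simp
    with lam0 m(1) show False by (simp add: in_keys_iff)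
  qed
qed

end
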